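(* Let $d\ge2$. For any Lebesgue measurable set $E\subset\mathbb R^d$ with $0<|E|<\infty$, one has $(E^{\dagger\star})^\dagger=E^{\dagger\star}$ and $(E^{\dagger\star})^{\dagger\star}=E^{\dagger\star}$, where equality of sets means their symmetric difference is a Lebesgue null set.
   Context: Write $x=(x',x_d)\in\mathbb R^{d-1}\times\mathbb R$, $\omega_{d-1}$ the volume of the unit ball of $\mathbb R^{d-1}$. Schwarz symmetrization: $E^\dagger=\{(x',x_d):r(x_d)>0,\ |x'|\le r(x_d)\}$ where $r(t)\ge0$ satisfies $\omega_{d-1}r(t)^{d-1}=|\{y\in\mathbb R^{d-1}:(y,t)\in E\}|$. Steiner symmetrization: $E^\star=\{(x',t):|E^{x'}|>0,\ |t|\le\frac12|E^{x'}|\}$ where $E^{x'}=\{t\in\mathbb R:(x',t)\in E\}$. $E^{\dagger\star}=(E^\dagger)^\star$. Symmetrizations of null sets are empty. *)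

theory Defs
  imports "HOL-Analysis.Analysis"
begin

text \<open>Points of R^d are pairs (x', x_d) with x' in a Euclidean space 'a of dimension d-1
  (so d = DIM('a) + 1 \<ge> 2 automatically) and x_d real.  Lebesgue measure on 'a \<times> real
  is the product Lebesgue measure.\<close>

definition unit_ball_vol :: "'a::euclidean_space itself \<Rightarrow> real" where
  "unit_ball_vol _ = measure lebesgue (ball (0::'a) 1)"

definition hslice :: "('a \<times> real) set \<Rightarrow> real \<Rightarrow> 'a set" where
  "hslice E t = {y. (y, t) \<in> E}"

definition vslice :: "('a \<times> real) set \<Rightarrow> 'a \<Rightarrow> real set" where
  "vslice E x' = {t. (x', t) \<in> E}"

text \<open>Radius r(t) with omega_{d-1} r(t)^(d-1) = |slice|; infinite if the slice has infinite measure.\<close>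
definition schwarz_rad :: "('a::euclidean_space \<times> real) set \<Rightarrow> real \<Rightarrow> ereal" where
  "schwarz_rad E t =
     (if emeasure lebesgue (hslice E t) = \<infinity> then \<infinity>
      else ereal (root DIM('a) (measure lebesgue (hslice E t) / unit_ball_vol TYPE('a))))"

definition schwarz :: "('a::euclidean_space \<times> real) set \<Rightarrow> ('a \<times> real) set" where
  "schwarz E = (if E \<in> null_sets lebesgue then {} else
     {(x', t). schwarz_rad E t > 0 \<and> ereal (norm x') \<le> schwarz_rad E t})"

definition steiner :: "('a::euclidean_space \<times> real) set \<Rightarrow> ('a \<times> real) set" where
  "steiner E = (if E \<in> null_sets lebesgue then {} else
     {(x', t). emeasure lebesgue (vslice E x') > 0 \<and>
               ennreal \<bar>t\<bar> \<le> emeasure lebesgue (vslice E x') / 2})"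

definition ae_eq :: "('a::euclidean_space) set \<Rightarrow> 'a set \<Rightarrow> bool" where
  "ae_eq A B \<longleftrightarrow> (A - B) \<union> (B - A) \<in> null_sets lebesgue"

end

theory Submission
  imports Defs
begin

lemma ae_meas_completion:
  assumes g: "g \<in> borel_measurable M" and ae: "AE x in M. f x = g x"
  shows "f \<in> borel_measurable (completion M)"
proof (rule measurableI)
  fix A :: "'b set" assume A: "A \<in> sets borel"
  from ae obtain N where N: "{x\<in>space M. \<not> f x = g x} \<subseteq> N" "N \<in> null_sets M"
    by (auto elim!: AE_E)
  have eq: "f -` A \<inter> space (completion M) = ((g -` A \<inter> space M) - N) \<union> ((f -` A \<inter> space M) \<inter> N)"
    using N(1) by auto
  have "(g -` A \<inter> space M) \<in> sets M" using g A by (simp add: measurable_sets)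
  hence "(g -` A \<inter> space M) - N \<in> sets M" using N(2) by (meson null_setsD2 sets.Diff)
  moreover have "(f -` A \<inter> space M) \<inter> N \<in> sets (completion M)"
    using N(2) by (intro null_sets_completion[of N]) blast+
  ultimately show "f -` A \<inter> space (completion M) \<in> sets (completion M)"
    unfolding eq by (metis sets.Un sets_completionI_sets)
qed simp

lemma null_times_UNIV:
  assumes "N \<in> null_sets (lebesgue :: 'a::euclidean_space measure)"
  shows "N \<times> (UNIV :: 'b::euclidean_space set) \<in> null_sets lebesgue"
proof -
  obtain N' where N': "N' \<in> null_sets (lborel::'a measure)" "N \<subseteq> N'"
    using assms unfolding null_sets_completion_iff2 by blast
  have "N' \<times> (UNIV::'b set) \<in> null_sets (lborel \<Otimes>\<^sub>M lborel)"
    using N' by (intro lborel.times_in_null_sets1) simp_all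
  hence "N' \<times> (UNIV::'b set) \<in> null_sets (lborel :: ('a \<times> 'b) measure)"
    by (simp only: lborel_prod)
  moreover have "N \<times> (UNIV::'b set) \<subseteq> N' \<times> UNIV" using N' by blast
  ultimately show ?thesis by (rule null_sets_completion_subset[OF _ null_sets_completionI, rotated])
qed

lemma UNIV_times_null:
  assumes "N \<in> null_sets (lebesgue :: 'b::euclidean_space measure)"
  shows "(UNIV :: 'a::euclidean_space set) \<times> N \<in> null_sets lebesgue"
proof -
  obtain N' where N': "N' \<in> null_sets (lborel::'b measure)" "N \<subseteq> N'"
    using assms unfolding null_sets_completion_iff2 by blast
  have "(UNIV::'a set) \<times> N' \<in> null_sets (lborel \<Otimes>\<^sub>M lborel)"
    using N' by (intro lborel.times_in_null_sets2) simp_all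
  hence "(UNIV::'a set) \<times> N' \<in> null_sets (lborel :: ('a \<times> 'b) measure)"
    by (simp only: lborel_prod)
  moreover have "(UNIV::'a set) \<times> N \<subseteq> UNIV \<times> N'" using N' by blast
  ultimately show ?thesis by (rule null_sets_completion_subset[OF _ null_sets_completionI, rotated])
qed

lemma fst_lebesgue_meas:
  "fst \<in> (lebesgue :: ('a::euclidean_space \<times> 'b::euclidean_space) measure) \<rightarrow>\<^sub>M (lebesgue :: 'a measure)"
proof (rule measurableI)
  fix A :: "'a set" assume "A \<in> sets lebesgue"
  then obtain S N N' where SN: "A = S \<union> N" "N \<subseteq> N'" "N' \<in> null_sets lborel" "S \<in> sets lborel"
    by (rule sets_completionE)
  have "S \<times> (UNIV::'b set) \<in> sets (lborel \<Otimes>\<^sub>M lborel)" using SN(4) by (intro pair_measureI) auto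
  hence 1: "S \<times> (UNIV::'b set) \<in> sets (lborel :: ('a\<times>'b) measure)" by (simp only: lborel_prod)
  have 2: "N' \<times> (UNIV::'b set) \<in> null_sets (lebesgue :: ('a\<times>'b) measure)"
    using SN by (intro null_times_UNIV null_sets_completionI)
  have eq: "fst -` A \<inter> space lebesgue = S \<times> UNIV \<union> N \<times> (UNIV::'b set)" using SN by auto
  show "fst -` A \<inter> space (lebesgue :: ('a\<times>'b) measure) \<in> sets lebesgue"
  proof -
    have "N \<times> (UNIV::'b set) \<in> null_sets lebesgue"
      using 2 SN(2) by (intro null_sets_completion_subset[OF _ 2]) blast
    then show ?thesis unfolding eq using 1 by (metis sets.Un sets_completionI_sets null_setsD2)
  qed
qed simp

lemma snd_lebesgue_meas:
  "snd \<in> (lebesgue :: ('a::euclidean_space \<times> 'b::euclidean_space) measure) \<rightarrow>\<^sub>M (lebesgue :: 'b measure)"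
proof (rule measurableI)
  fix A :: "'b set" assume "A \<in> sets lebesgue"
  then obtain S N N' where SN: "A = S \<union> N" "N \<subseteq> N'" "N' \<in> null_sets lborel" "S \<in> sets lborel"
    by (rule sets_completionE)
  have "(UNIV::'a set) \<times> S \<in> sets (lborel \<Otimes>\<^sub>M lborel)" using SN(4) by (intro pair_measureI) auto
  hence 1: "(UNIV::'a set) \<times> S \<in> sets (lborel :: ('a\<times>'b) measure)" by (simp only: lborel_prod)
  have 2: "(UNIV::'a set) \<times> N' \<in> null_sets (lebesgue :: ('a\<times>'b) measure)"
    using SN by (intro UNIV_times_null null_sets_completionI)
  have eq: "snd -` A \<inter> space lebesgue = UNIV \<times> S \<union> (UNIV::'a set) \<times> N" using SN by auto
  show "snd -` A \<inter> space (lebesgue :: ('a\<times>'b) measure) \<in> sets lebesgue"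
  proof -
    have "(UNIV::'a set) \<times> N \<in> null_sets lebesgue"
      using 2 SN(2) by (intro null_sets_completion_subset[OF _ 2]) blast
    then show ?thesis unfolding eq using 1 by (metis sets.Un sets_completionI_sets null_setsD2)
  qed
qed simp


lemma lborel_null_vslices:
  assumes "N' \<in> null_sets (lborel :: ('a::euclidean_space \<times> 'b::euclidean_space) measure)"
  shows "AE x in (lborel::'a measure). Pair x -` N' \<in> null_sets (lborel::'b measure)"
proof -
  have N: "N' \<in> null_sets (lborel \<Otimes>\<^sub>M lborel)" using assms by (simp only: lborel_prod)
  have m: "(\<lambda>x. emeasure (lborel::'b measure) (Pair x -` N')) \<in> borel_measurable (lborel::'a measure)"
    using null_setsD2[OF N] by (rule lborel_pair.measurable_emeasure_Pair1)
  have "0 = emeasure (lborel \<Otimes>\<^sub>M lborel) N'" using N by (simp add: null_setsD1)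
  also have "\<dots> = (\<integral>\<^sup>+x. emeasure (lborel::'b measure) (Pair x -` N') \<partial>(lborel::'a measure))"
    using null_setsD2[OF N] by (rule lborel.emeasure_pair_measure_alt)
  finally have "AE x in (lborel::'a measure). emeasure (lborel::'b measure) (Pair x -` N') = 0"
    using nn_integral_0_iff_AE[OF m] by simp
  then show ?thesis
  proof (rule eventually_mono)
    fix x assume "emeasure (lborel::'b measure) (Pair x -` N') = 0"
    moreover have "Pair x -` N' \<in> sets (lborel::'b measure)"
      using null_setsD2[OF N] by (rule sets_Pair1)
    ultimately show "Pair x -` N' \<in> null_sets lborel" by (simp add: null_sets_def)
  qed
qed

lemma lborel_null_hslices:
  assumes "N' \<in> null_sets (lborel :: ('a::euclidean_space \<times> 'b::euclidean_space) measure)"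
  shows "AE y in (lborel::'b measure). (\<lambda>x. (x, y)) -` N' \<in> null_sets (lborel::'a measure)"
proof -
  have N: "N' \<in> null_sets (lborel \<Otimes>\<^sub>M lborel)" using assms by (simp only: lborel_prod)
  have m: "(\<lambda>y. emeasure (lborel::'a measure) ((\<lambda>x. (x, y)) -` N')) \<in> borel_measurable (lborel::'b measure)"
    using null_setsD2[OF N] by (rule lborel_pair.measurable_emeasure_Pair2)
  have "0 = emeasure (lborel \<Otimes>\<^sub>M lborel) N'" using N by (simp add: null_setsD1)
  also have "\<dots> = (\<integral>\<^sup>+y. emeasure (lborel::'a measure) ((\<lambda>x. (x, y)) -` N') \<partial>(lborel::'b measure))"
    using null_setsD2[OF N] by (rule lborel_pair.emeasure_pair_measure_alt2)
  finally have "AE y in (lborel::'b measure). emeasure (lborel::'a measure) ((\<lambda>x. (x, y)) -` N') = 0"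
    using nn_integral_0_iff_AE[OF m] by simp
  then show ?thesis
  proof (rule eventually_mono)
    fix y assume "emeasure (lborel::'a measure) ((\<lambda>x. (x, y)) -` N') = 0"
    moreover have "(\<lambda>x. (x, y)) -` N' \<in> sets (lborel::'a measure)"
      using null_setsD2[OF N] by (rule sets_Pair2)
    ultimately show "(\<lambda>x. (x, y)) -` N' \<in> null_sets lborel" by (simp add: null_sets_def)
  qed
qed

lemma vslice_ae:
  fixes E :: "('a::euclidean_space \<times> 'b::euclidean_space) set"
  assumes "E \<in> sets lebesgue"
  shows "\<exists>g\<in>borel_measurable (lborel::'a measure). AE x in lborel.
           Pair x -` E \<in> sets (lebesgue::'b measure) \<and> emeasure lebesgue (Pair x -` E) = g x"
proof -
  obtain S N N' where SN: "E = S \<union> N" "N \<subseteq> N'" "N' \<in> null_sets lborel" "S \<in> sets lborel"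
    using assms by (rule sets_completionE)
  have S: "S \<in> sets (lborel \<Otimes>\<^sub>M lborel)" using SN(4) by (simp only: lborel_prod)
  let ?g = "\<lambda>x. emeasure (lborel::'b measure) (Pair x -` S)"
  have g: "?g \<in> borel_measurable lborel"
    using S by (rule lborel_pair.measurable_emeasure_Pair1)
  have "AE x in (lborel::'a measure).
           Pair x -` E \<in> sets (lebesgue::'b measure) \<and> emeasure lebesgue (Pair x -` E) = ?g x"
    using lborel_null_vslices[OF SN(3)]
  proof (rule eventually_mono)
    fix x assume nx: "Pair x -` N' \<in> null_sets (lborel::'b measure)"
    have Sx: "Pair x -` S \<in> sets (lborel::'b measure)" using S by (rule sets_Pair1)
    have Nx: "Pair x -` N \<in> null_sets (lebesgue::'b measure)"
      by (rule null_sets_completion_subset[OF _ null_sets_completionI[OF nx]]) (use SN(2) in blast)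
    have eq: "Pair x -` E = Pair x -` S \<union> Pair x -` N" using SN(1) by blast
    have 1: "Pair x -` S \<in> sets (lebesgue::'b measure)" using Sx by (rule sets_completionI_sets)
    show "Pair x -` E \<in> sets (lebesgue::'b measure) \<and> emeasure lebesgue (Pair x -` E) = ?g x"
      unfolding eq
    proof
      show "Pair x -` S \<union> Pair x -` N \<in> sets lebesgue" using 1 Nx by (metis sets.Un null_setsD2)
      have "emeasure lebesgue (Pair x -` S \<union> Pair x -` N) = emeasure lebesgue (Pair x -` S)"
        using 1 Nx by (rule emeasure_Un_null_set)
      also have "\<dots> = ?g x" using Sx by simp
      finally show "emeasure lebesgue (Pair x -` S \<union> Pair x -` N) = ?g x" .
    qed
  qed
  with g show ?thesis by (intro bexI[of _ ?g])
qed

lemma hslice_ae: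
  fixes E :: "('a::euclidean_space \<times> 'b::euclidean_space) set"
  assumes "E \<in> sets lebesgue"
  shows "\<exists>g\<in>borel_measurable (lborel::'b measure). AE y in lborel.
           (\<lambda>x. (x, y)) -` E \<in> sets (lebesgue::'a measure) \<and> emeasure lebesgue ((\<lambda>x. (x, y)) -` E) = g y"
proof -
  obtain S N N' where SN: "E = S \<union> N" "N \<subseteq> N'" "N' \<in> null_sets lborel" "S \<in> sets lborel"
    using assms by (rule sets_completionE)
  have S: "S \<in> sets (lborel \<Otimes>\<^sub>M lborel)" using SN(4) by (simp only: lborel_prod)
  let ?g = "\<lambda>y. emeasure (lborel::'a measure) ((\<lambda>x. (x, y)) -` S)"
  have g: "?g \<in> borel_measurable lborel"
    using S by (rule lborel_pair.measurable_emeasure_Pair2)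
  have "AE y in (lborel::'b measure).
           (\<lambda>x. (x, y)) -` E \<in> sets (lebesgue::'a measure) \<and> emeasure lebesgue ((\<lambda>x. (x, y)) -` E) = ?g y"
    using lborel_null_hslices[OF SN(3)]
  proof (rule eventually_mono)
    fix y assume nx: "(\<lambda>x. (x, y)) -` N' \<in> null_sets (lborel::'a measure)"
    have Sx: "(\<lambda>x. (x, y)) -` S \<in> sets (lborel::'a measure)" using S by (rule sets_Pair2)
    have Nx: "(\<lambda>x. (x, y)) -` N \<in> null_sets (lebesgue::'a measure)"
      by (rule null_sets_completion_subset[OF _ null_sets_completionI[OF nx]]) (use SN(2) in blast)
    have eq: "(\<lambda>x. (x, y)) -` E = (\<lambda>x. (x, y)) -` S \<union> (\<lambda>x. (x, y)) -` N" using SN(1) by blast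
    have 1: "(\<lambda>x. (x, y)) -` S \<in> sets (lebesgue::'a measure)" using Sx by (rule sets_completionI_sets)
    show "(\<lambda>x. (x, y)) -` E \<in> sets (lebesgue::'a measure) \<and> emeasure lebesgue ((\<lambda>x. (x, y)) -` E) = ?g y"
      unfolding eq
    proof
      show "(\<lambda>x. (x, y)) -` S \<union> (\<lambda>x. (x, y)) -` N \<in> sets lebesgue" using 1 Nx by (metis sets.Un null_setsD2)
      have "emeasure lebesgue ((\<lambda>x. (x, y)) -` S \<union> (\<lambda>x. (x, y)) -` N) = emeasure lebesgue ((\<lambda>x. (x, y)) -` S)"
        using 1 Nx by (rule emeasure_Un_null_set)
      also have "\<dots> = ?g y" using Sx by simp
      finally show "emeasure lebesgue ((\<lambda>x. (x, y)) -` S \<union> (\<lambda>x. (x, y)) -` N) = ?g y" .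
    qed
  qed
  with g show ?thesis by (intro bexI[of _ ?g])
qed


lemma vslice_meas_leb:
  fixes E :: "('a::euclidean_space \<times> 'b::euclidean_space) set"
  assumes "E \<in> sets lebesgue"
  shows "(\<lambda>x. emeasure (lebesgue::'b measure) (Pair x -` E)) \<in> borel_measurable (lebesgue::'a measure)"
proof -
  obtain g where g: "g \<in> borel_measurable (lborel::'a measure)"
    and ae: "AE x in lborel. Pair x -` E \<in> sets (lebesgue::'b measure) \<and> emeasure lebesgue (Pair x -` E) = g x"
    using vslice_ae[OF assms] by blast
  show ?thesis
    by (rule ae_meas_completion[OF g]) (rule eventually_mono[OF ae], blast)
qed

lemma hslice_meas_leb:
  fixes E :: "('a::euclidean_space \<times> 'b::euclidean_space) set"
  assumes "E \<in> sets lebesgue"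
  shows "(\<lambda>y. emeasure (lebesgue::'a measure) ((\<lambda>x. (x, y)) -` E)) \<in> borel_measurable (lebesgue::'b measure)"
proof -
  obtain g where g: "g \<in> borel_measurable (lborel::'b measure)"
    and ae: "AE y in lborel. (\<lambda>x. (x, y)) -` E \<in> sets (lebesgue::'a measure) \<and> emeasure lebesgue ((\<lambda>x. (x, y)) -` E) = g y"
    using hslice_ae[OF assms] by blast
  show ?thesis
    by (rule ae_meas_completion[OF g]) (rule eventually_mono[OF ae], blast)
qed

lemma null_vslices_leb:
  fixes D :: "('a::euclidean_space \<times> 'b::euclidean_space) set"
  assumes "D \<in> null_sets lebesgue"
  shows "AE x in (lebesgue::'a measure). Pair x -` D \<in> null_sets (lebesgue::'b measure)"
proof -
  obtain N' where N': "N' \<in> null_sets (lborel::('a\<times>'b) measure)" "D \<subseteq> N'"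
    using assms unfolding null_sets_completion_iff2 by blast
  have "AE x in (lborel::'a measure). Pair x -` D \<in> null_sets (lebesgue::'b measure)"
  proof (rule eventually_mono[OF lborel_null_vslices[OF N'(1)]])
    fix x assume "Pair x -` N' \<in> null_sets (lborel::'b measure)"
    then show "Pair x -` D \<in> null_sets (lebesgue::'b measure)"
      by (rule null_sets_completion_subset[OF _ null_sets_completionI, rotated]) (use N'(2) in blast)
  qed
  then show ?thesis by (rule AE_completion)
qed

lemma tonelli_null_h:
  fixes D :: "('a::euclidean_space \<times> 'b::euclidean_space) set"
  assumes D: "D \<in> sets lebesgue" and sl: "\<And>y. (\<lambda>x. (x, y)) -` D \<in> null_sets (lebesgue::'a measure)"
  shows "D \<in> null_sets lebesgue"
proof -
  obtain S N N' where SN: "D = S \<union> N" "N \<subseteq> N'" "N' \<in> null_sets lborel" "S \<in> sets lborel"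
    using D by (rule sets_completionE)
  have S: "S \<in> sets (lborel \<Otimes>\<^sub>M lborel)" using SN(4) by (simp only: lborel_prod)
  have "emeasure (lborel \<Otimes>\<^sub>M lborel) S = (\<integral>\<^sup>+y. emeasure (lborel::'a measure) ((\<lambda>x. (x, y)) -` S) \<partial>(lborel::'b measure))"
    using S by (rule lborel_pair.emeasure_pair_measure_alt2)
  also have "\<dots> = (\<integral>\<^sup>+y. 0 \<partial>(lborel::'b measure))"
  proof (rule nn_integral_cong)
    fix y
    have Sy: "(\<lambda>x. (x, y)) -` S \<in> sets (lborel::'a measure)" using S by (rule sets_Pair2)
    have "(\<lambda>x. (x, y)) -` S \<in> null_sets (lebesgue::'a measure)"
      by (rule null_sets_completion_subset[OF _ sl[of y]]) (use SN(1) in blast)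
    then have "emeasure lebesgue ((\<lambda>x. (x, y)) -` S) = 0" by (simp add: null_setsD1)
    then show "emeasure (lborel::'a measure) ((\<lambda>x. (x, y)) -` S) = 0" using Sy by simp
  qed
  finally have "emeasure (lborel \<Otimes>\<^sub>M lborel) S = 0" by simp
  then have "S \<in> null_sets (lborel \<Otimes>\<^sub>M lborel)" using S by (simp add: null_sets_def)
  then have "S \<in> null_sets (lborel::('a\<times>'b) measure)" by (simp only: lborel_prod)
  then have "S \<union> N' \<in> null_sets (lborel::('a\<times>'b) measure)" using SN(3) by (rule null_sets.Un)
  then show ?thesis
    by (rule null_sets_completion_subset[OF _ null_sets_completionI, rotated]) (use SN(1,2) in blast)
qed

lemma emeasure_ae_eq_sets:
  assumes "A \<in> sets M" "B \<in> sets M" "(A - B) \<union> (B - A) \<in> null_sets M"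
  shows "emeasure M A = emeasure M B"
proof (rule emeasure_eq_AE)
  show "AE x in M. (x \<in> A) = (x \<in> B)"
    using AE_not_in[OF assms(3)] by (rule eventually_mono) blast
qed (use assms in auto)


lemma hslice_vimage: "hslice E t = (\<lambda>x. (x, t)) -` E"
  by (auto simp: hslice_def)

lemma vslice_vimage: "vslice E x = Pair x -` E"
  by (auto simp: vslice_def)

lemma schwarz_rad_meas:
  fixes E :: "('a::euclidean_space \<times> real) set"
  assumes "E \<in> sets lebesgue"
  shows "schwarz_rad E \<in> borel_measurable lebesgue"
proof -
  have f[measurable]: "(\<lambda>t. emeasure (lebesgue::'a measure) (hslice E t)) \<in> borel_measurable lebesgue"
    unfolding hslice_vimage by (rule hslice_meas_leb[OF assms])
  have eq: "schwarz_rad E = (\<lambda>t. if emeasure lebesgue (hslice E t) = \<infinity> then \<infinity>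
      else ereal (root DIM('a) (enn2real (emeasure lebesgue (hslice E t)) / unit_ball_vol TYPE('a))))"
    by (rule ext) (simp add: schwarz_rad_def measure_def)
  show ?thesis unfolding eq by measurable
qed

lemma norm_fst_meas:
  "(\<lambda>p. norm (fst p)) \<in> borel_measurable (lebesgue :: ('a::euclidean_space \<times> 'b::euclidean_space) measure)"
proof -
  have "(\<lambda>p::('a\<times>'b). norm (fst p)) \<in> borel_measurable borel"
    by (intro borel_measurable_continuous_onI continuous_intros)
  then have "(\<lambda>p::('a\<times>'b). norm (fst p)) \<in> borel_measurable lborel"
    by (simp add: measurable_lborel1)
  then show ?thesis by (rule measurable_completion)
qed

lemma schwarz_meas:
  fixes E :: "('a::euclidean_space \<times> real) set"
  assumes "E \<in> sets lebesgue"
  shows "schwarz E \<in> sets lebesgue"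
proof (cases "E \<in> null_sets lebesgue")
  case True then show ?thesis by (simp add: schwarz_def)
next
  case False
  have r: "(\<lambda>p. schwarz_rad E (snd p)) \<in> borel_measurable (lebesgue :: ('a \<times> real) measure)"
    using measurable_compose[OF snd_lebesgue_meas schwarz_rad_meas[OF assms]] by simp
  have n: "(\<lambda>p. ereal (norm (fst p))) \<in> borel_measurable (lebesgue :: ('a \<times> real) measure)"
    using norm_fst_meas by measurable
  have "{p \<in> space (lebesgue :: ('a \<times> real) measure). 0 < schwarz_rad E (snd p) \<and> ereal (norm (fst p)) \<le> schwarz_rad E (snd p)} \<in> sets lebesgue"
    using r n by measurable
  moreover have "schwarz E = {p \<in> space (lebesgue :: ('a \<times> real) measure). 0 < schwarz_rad E (snd p) \<and> ereal (norm (fst p)) \<le> schwarz_rad E (snd p)}"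
    using False by (auto simp: schwarz_def)
  ultimately show ?thesis by simp
qed

lemma steiner_meas:
  fixes E :: "('a::euclidean_space \<times> real) set"
  assumes "E \<in> sets lebesgue"
  shows "steiner E \<in> sets lebesgue"
proof (cases "E \<in> null_sets lebesgue")
  case True then show ?thesis by (simp add: steiner_def)
next
  case False
  have m0: "(\<lambda>x. emeasure (lebesgue::real measure) (vslice E x)) \<in> borel_measurable (lebesgue::'a measure)"
    unfolding vslice_vimage by (rule vslice_meas_leb[OF assms])
  have m: "(\<lambda>p. emeasure (lebesgue::real measure) (vslice E (fst p))) \<in> borel_measurable (lebesgue :: ('a \<times> real) measure)"
    using measurable_compose[OF fst_lebesgue_meas m0] by simp
  have a00: "(\<lambda>p::('a\<times>real). \<bar>snd p\<bar>) \<in> borel_measurable borel"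
    by (intro borel_measurable_continuous_onI continuous_intros)
  have a0: "(\<lambda>p::('a\<times>real). ennreal \<bar>snd p\<bar>) \<in> borel_measurable borel"
    using a00 by measurable
  then have a0: "(\<lambda>p::('a\<times>real). ennreal \<bar>snd p\<bar>) \<in> borel_measurable lborel"
    by (simp add: measurable_lborel1)
  have a: "(\<lambda>p::('a\<times>real). ennreal \<bar>snd p\<bar>) \<in> borel_measurable lebesgue"
    using a0 by (rule measurable_completion)
  have "{p \<in> space (lebesgue :: ('a \<times> real) measure). 0 < emeasure lebesgue (vslice E (fst p)) \<and>
            ennreal \<bar>snd p\<bar> \<le> emeasure lebesgue (vslice E (fst p)) / 2} \<in> sets lebesgue"
    using m a by measurable
  moreover have "steiner E = {p \<in> space (lebesgue :: ('a \<times> real) measure). 0 < emeasure lebesgue (vslice E (fst p)) \<and>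
            ennreal \<bar>snd p\<bar> \<le> emeasure lebesgue (vslice E (fst p)) / 2}"
    using False by (auto simp: steiner_def)
  ultimately show ?thesis by simp
qed

lemma sphere_null: "sphere (0::'a::euclidean_space) r \<in> null_sets lebesgue"
  using negligible_sphere negligible_iff_null_sets by blast

lemma radial_schwarz_slice:
  fixes A :: "'a::euclidean_space set"
  assumes rad: "\<And>x y. x \<in> A \<Longrightarrow> norm y \<le> norm x \<Longrightarrow> y \<in> A"
  defines "R \<equiv> (if emeasure lebesgue A = \<infinity> then \<infinity>
      else ereal (root DIM('a) (measure lebesgue A / unit_ball_vol TYPE('a))))"
  shows "(A - {x. 0 < R \<and> ereal (norm x) \<le> R}) \<union> ({x. 0 < R \<and> ereal (norm x) \<le> R} - A) \<in> null_sets lebesgue"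
proof (cases "bounded A")
  case False
  have AU: "A = UNIV"
  proof safe
    fix y :: 'a
    from False obtain x where "x \<in> A" "norm y < norm x"
      unfolding bounded_iff by (meson not_le)
    then show "y \<in> A" using rad by (meson less_imp_le)
  qed simp
  have "emeasure (lebesgue::'a measure) UNIV = \<infinity>" by simp
  then have "R = \<infinity>" unfolding R_def AU by simp
  then show ?thesis using AU by simp
next
  case bA: True
  show ?thesis
  proof (cases "A = {}")
    case True
    then have "R = 0" unfolding R_def by simp
    then show ?thesis using True by simp
  next
    case nA: False
    define \<rho> where "\<rho> = Sup (norm ` A)"
    have bdd: "bdd_above (norm ` A)" using bA by (meson bdd_above_norm)
    have ne: "norm ` A \<noteq> {}" using nA by simp
    have up: "norm x \<le> \<rho>" if "x \<in> A" for x
      unfolding \<rho>_def using bdd that by (intro cSup_upper) auto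
    have r0: "0 \<le> \<rho>" using nA up by (meson all_not_in_conv norm_ge_zero order_trans)
    have sub1: "ball 0 \<rho> \<subseteq> A"
    proof
      fix y :: 'a assume "y \<in> ball 0 \<rho>"
      then have "norm y < Sup (norm ` A)" by (simp add: \<rho>_def)
      then obtain x where "x \<in> A" "norm y < norm x"
        using less_cSup_iff[OF ne bdd] by auto
      then show "y \<in> A" using rad by (meson less_imp_le)
    qed
    have sub2: "A \<subseteq> cball 0 \<rho>" using up by auto
    have diffA: "(A - ball 0 \<rho>) \<union> (ball 0 \<rho> - A) \<in> null_sets lebesgue"
      by (rule null_sets_completion_subset[OF _ sphere_null[of \<rho>]]) (use sub1 sub2 in auto)
    have Ameas: "A \<in> sets lebesgue"
    proof -
      have "A - ball 0 \<rho> \<in> null_sets lebesgue"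
        by (rule null_sets_completion_subset[OF _ diffA]) blast
      then have "ball 0 \<rho> \<union> (A - ball 0 \<rho>) \<in> sets lebesgue"
        by (metis sets.Un null_setsD2 sets_completionI_sets borel_open open_ball sets_lborel)
      moreover have "ball 0 \<rho> \<union> (A - ball 0 \<rho>) = A" using sub1 by blast
      ultimately show ?thesis by simp
    qed
    have bm: "ball (0::'a) \<rho> \<in> sets lebesgue" by simp
    have eA: "emeasure lebesgue A = emeasure lebesgue (ball (0::'a) \<rho>)"
      by (rule emeasure_ae_eq_sets[OF Ameas bm diffA])
    define \<omega> where "\<omega> = unit_ball_vol TYPE('a)"
    have e1: "emeasure lebesgue (ball (0::'a) 1) = ennreal \<omega>"
      unfolding \<omega>_def unit_ball_vol_def
      using emeasure_lborel_ball_finite[of "0::'a" 1] by (simp add: emeasure_eq_ennreal_measure)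
    have wpos: "\<omega> > 0"
      unfolding \<omega>_def unit_ball_vol_def using content_ball_pos[of 1 "0::'a"] by simp
    have eA2: "emeasure lebesgue A = ennreal (\<rho> ^ DIM('a) * \<omega>)"
      unfolding eA emeasure_lebesgue_ball_conv_unit_ball[OF r0] e1
      using r0 wpos by (simp add: ennreal_mult')
    have mA: "measure lebesgue A = \<rho> ^ DIM('a) * \<omega>"
      unfolding measure_def eA2 using r0 wpos by simp
    have "R = ereal (root DIM('a) (\<rho> ^ DIM('a)))"
      unfolding R_def eA2 mA \<omega>_def[symmetric] using wpos by simp
    also have "\<dots> = ereal \<rho>" using r0 by (simp add: real_root_power_cancel)
    finally have R: "R = ereal \<rho>" .
    have B: "{x. 0 < R \<and> ereal (norm x) \<le> R} = {x::'a. 0 < \<rho> \<and> norm x \<le> \<rho>}" unfolding R by simp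
    have "(A - {x::'a. 0 < \<rho> \<and> norm x \<le> \<rho>}) \<union> ({x. 0 < \<rho> \<and> norm x \<le> \<rho>} - A) \<subseteq> sphere 0 \<rho>"
    proof
      fix x assume x: "x \<in> (A - {x::'a. 0 < \<rho> \<and> norm x \<le> \<rho>}) \<union> ({x. 0 < \<rho> \<and> norm x \<le> \<rho>} - A)"
      show "x \<in> sphere 0 \<rho>"
      proof (cases "x \<in> A")
        case True
        then have "norm x \<le> \<rho>" using sub2 by auto
        moreover have "\<not> (0 < \<rho> \<and> norm x \<le> \<rho>)" using x True by auto
        ultimately show ?thesis using norm_ge_zero[of x] r0 by simp
      next
        case False
        then have "norm x \<le> \<rho>" using x by auto
        moreover have "\<not> norm x < \<rho>" using False sub1 by auto
        ultimately show ?thesis by simp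
      qed
    qed
    then show ?thesis unfolding B
      by (rule null_sets_completion_subset[OF _ sphere_null[of \<rho>]])
  qed
qed


lemma interval_meas:
  fixes m :: ennreal
  shows "emeasure (lebesgue::real measure) {t. 0 < m \<and> ennreal \<bar>t\<bar> \<le> m / 2} = m"
proof (cases m)
  case (real c)
  show ?thesis
  proof (cases "c > 0")
    case True
    have "{t. 0 < m \<and> ennreal \<bar>t\<bar> \<le> m / 2} = {-(c/2)..c/2}"
      using True by (auto simp: real ennreal_divide_numeral ennreal_le_iff)
    then show ?thesis using True real by simp
  next
    case False
    then have "m = 0" using real by (simp add: ennreal_eq_0_iff)
    then show ?thesis by simp
  qed
next
  case top
  then have "{t. 0 < m \<and> ennreal \<bar>t\<bar> \<le> m / 2} = UNIV" by (simp add: ennreal_top_divide)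
  then show ?thesis using top by simp
qed

lemma divide2_mono_ennreal: "(a::ennreal) \<le> b \<Longrightarrow> a / 2 \<le> b / 2"
  by (simp add: divide_right_mono_ennreal)


theorem lemma4p3:
  fixes E :: "('a::euclidean_space \<times> real) set"
  assumes "E \<in> sets lebesgue"
    and "0 < emeasure lebesgue E" and "emeasure lebesgue E < \<infinity>"
  shows "ae_eq (schwarz (steiner (schwarz E))) (steiner (schwarz E))
       \<and> ae_eq (steiner (schwarz (steiner (schwarz E)))) (steiner (schwarz E))"
proof -
  define r where "r = schwarz_rad E"
  define F where "F = schwarz E"
  define G where "G = steiner F"
  define H where "H = schwarz G"
  have Fm: "F \<in> sets lebesgue" unfolding F_def by (rule schwarz_meas[OF assms(1)])
  have Gm: "G \<in> sets lebesgue" unfolding G_def by (rule steiner_meas[OF Fm])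
  have Hm: "H \<in> sets lebesgue" unfolding H_def by (rule schwarz_meas[OF Gm])
  have e0: "({}::('a \<times> real) set) \<in> null_sets lebesgue" by simp
  show ?thesis
  proof (cases "G \<in> null_sets lebesgue")
    case True
    have H0: "H = {}" unfolding H_def using True by (simp add: schwarz_def)
    have S0: "steiner H = {}" unfolding H0 steiner_def using e0 by simp
    have "ae_eq {} G" unfolding ae_eq_def using True by simp
    then show ?thesis unfolding H_def[symmetric] G_def[symmetric] F_def[symmetric]
      using S0 H0 by simp
  next
    case Gnn: False
    have Fnn: "F \<notin> null_sets lebesgue"
    proof
      assume "F \<in> null_sets lebesgue"
      then have "G = {}" unfolding G_def by (simp add: steiner_def)
      then show False using Gnn e0 by simp
    qed
    have Enn: "E \<notin> null_sets lebesgue"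
    proof
      assume "E \<in> null_sets lebesgue"
      then have "F = {}" unfolding F_def by (simp add: schwarz_def)
      then show False using Fnn e0 by simp
    qed
    have rm: "r \<in> borel_measurable (lebesgue::real measure)"
      unfolding r_def by (rule schwarz_rad_meas[OF assms(1)])
    define V where "V s = {t. 0 < r t \<and> ereal s \<le> r t}" for s
    have Vm: "V s \<in> sets lebesgue" for s
    proof -
      have "{t \<in> space (lebesgue::real measure). 0 < r t \<and> ereal s \<le> r t} \<in> sets lebesgue"
        using rm by measurable
      then show ?thesis by (simp add: V_def)
    qed
    define \<mu> where "\<mu> s = emeasure (lebesgue::real measure) (V s)" for s
    have \<mu>mono: "\<mu> s' \<le> \<mu> s" if "s \<le> s'" for s s'
    proof -
      have "V s' \<subseteq> V s"
        unfolding V_def using that by (auto intro: order_trans[of "ereal s" "ereal s'"])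
      then show ?thesis unfolding \<mu>_def by (rule emeasure_mono) (rule Vm)
    qed
    have vF: "vslice F x = V (norm x)" for x
      using Enn by (auto simp: vslice_def F_def schwarz_def V_def r_def)
    have Gdef: "G = {(x, t). 0 < \<mu> (norm x) \<and> ennreal \<bar>t\<bar> \<le> \<mu> (norm x) / 2}"
      using Fnn unfolding G_def steiner_def vF \<mu>_def by simp
    have Hdef: "H = {(x, t). 0 < schwarz_rad G t \<and> ereal (norm x) \<le> schwarz_rad G t}"
      using Gnn unfolding H_def schwarz_def by simp
    define D where "D = (H - G) \<union> (G - H)"
    have Dm: "D \<in> sets lebesgue" unfolding D_def using Hm Gm by auto
    have Dnull: "D \<in> null_sets lebesgue"
    proof (rule tonelli_null_h[OF Dm])
      fix y
      define A where "A = hslice G y"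
      have rad: "z \<in> A" if "x \<in> A" "norm z \<le> norm x" for x z
      proof -
        have "\<mu> (norm x) \<le> \<mu> (norm z)" using that(2) by (rule \<mu>mono)
        moreover have "ennreal \<bar>y\<bar> \<le> \<mu> (norm x) / 2 \<Longrightarrow> ennreal \<bar>y\<bar> \<le> \<mu> (norm z) / 2"
          using divide2_mono_ennreal[OF calculation] by (rule order_trans[rotated])
        ultimately show ?thesis using that(1) unfolding A_def hslice_def Gdef by auto
      qed
      have eqD: "(\<lambda>x. (x, y)) -` D = (A - {x. 0 < schwarz_rad G y \<and> ereal (norm x) \<le> schwarz_rad G y})
          \<union> ({x. 0 < schwarz_rad G y \<and> ereal (norm x) \<le> schwarz_rad G y} - A)"
        unfolding D_def A_def Hdef hslice_def by auto
      show "(\<lambda>x. (x, y)) -` D \<in> null_sets lebesgue"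
      proof -
        have sr: "schwarz_rad G y = (if emeasure lebesgue A = \<infinity> then \<infinity>
            else ereal (root DIM('a) (measure lebesgue A / unit_ball_vol TYPE('a))))"
          unfolding schwarz_rad_def A_def ..
        show ?thesis unfolding eqD sr
          by (rule radial_schwarz_slice) (rule rad; assumption)
      qed
    qed
    have conj1: "ae_eq H G" unfolding ae_eq_def D_def[symmetric] by (rule Dnull)
    have vG: "vslice G x = {t. 0 < \<mu> (norm x) \<and> ennreal \<bar>t\<bar> \<le> \<mu> (norm x) / 2}" for x
      unfolding vslice_def Gdef by simp
    have SG: "steiner G = G"
      using Gnn unfolding steiner_def vG interval_meas by (simp add: Gdef)
    have Hnn: "H \<notin> null_sets lebesgue"
    proof
      assume "H \<in> null_sets lebesgue"
      then have "H \<union> D \<in> null_sets lebesgue" using Dnull by (rule null_sets.Un)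
      moreover have "G \<subseteq> H \<union> D" unfolding D_def by blast
      ultimately have "G \<in> null_sets lebesgue"
        by (rule null_sets_completion_subset[rotated])
      then show False using Gnn by simp
    qed
    have ae: "AE x in (lebesgue::'a measure). emeasure lebesgue (vslice H x) = emeasure lebesgue (vslice G x)"
    proof -
      obtain gH where "AE x in (lborel::'a measure). Pair x -` H \<in> sets (lebesgue::real measure) \<and> emeasure lebesgue (Pair x -` H) = gH x"
        using vslice_ae[OF Hm] by blast
      then have aH: "AE x in (lebesgue::'a measure). Pair x -` H \<in> sets (lebesgue::real measure)"
        by (intro AE_completion) (rule eventually_mono, assumption, blast)
      obtain gG where "AE x in (lborel::'a measure). Pair x -` G \<in> sets (lebesgue::real measure) \<and> emeasure lebesgue (Pair x -` G) = gG x"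
        using vslice_ae[OF Gm] by blast
      then have aG: "AE x in (lebesgue::'a measure). Pair x -` G \<in> sets (lebesgue::real measure)"
        by (intro AE_completion) (rule eventually_mono, assumption, blast)
      have aD: "AE x in (lebesgue::'a measure). Pair x -` D \<in> null_sets (lebesgue::real measure)"
        by (rule null_vslices_leb[OF Dnull])
      show ?thesis
      proof (rule eventually_mono[OF eventually_conj[OF aH eventually_conj[OF aG aD]]])
        fix x assume x: "Pair x -` H \<in> sets (lebesgue::real measure) \<and> Pair x -` G \<in> sets (lebesgue::real measure)
            \<and> Pair x -` D \<in> null_sets (lebesgue::real measure)"
        have "(Pair x -` H - Pair x -` G) \<union> (Pair x -` G - Pair x -` H) = Pair x -` D"
          unfolding D_def by auto
        then show "emeasure lebesgue (vslice H x) = emeasure lebesgue (vslice G x)"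
          unfolding vslice_vimage using x by (intro emeasure_ae_eq_sets) auto
      qed
    qed
    then obtain N0 where N0: "{x \<in> space (lebesgue::'a measure). \<not> emeasure lebesgue (vslice H x) = emeasure lebesgue (vslice G x)} \<subseteq> N0"
      "emeasure lebesgue N0 = 0" "N0 \<in> sets lebesgue"
      by (rule AE_E)
    have N0n: "N0 \<in> null_sets (lebesgue::'a measure)" using N0 by (simp add: null_sets_def)
    have "(steiner H - steiner G) \<union> (steiner G - steiner H) \<subseteq> N0 \<times> (UNIV::real set)"
    proof
      fix p assume p: "p \<in> (steiner H - steiner G) \<union> (steiner G - steiner H)"
      obtain x t where pxt: "p = (x, t)" by (cases p)
      have "emeasure lebesgue (vslice H x) \<noteq> emeasure lebesgue (vslice G x)"
        using p Hnn Gnn unfolding pxt steiner_def by auto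
      then show "p \<in> N0 \<times> UNIV" using N0(1) pxt by auto
    qed
    then have "ae_eq (steiner H) (steiner G)"
      unfolding ae_eq_def by (rule null_sets_completion_subset[OF _ null_times_UNIV[OF N0n]])
    then have conj2: "ae_eq (steiner H) G" unfolding SG .
    show ?thesis using conj1 conj2 unfolding H_def G_def F_def by (rule conjI)
  qed
qed

end
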